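(* Let $G$ be a Lie group, let $\mathcal{X}$ and $\mathcal{Y}$ be linear vector fields on $G$ with flows $(\varphi_t)_{t\in\mathbb{R}}$ and $(\psi_t)_{t\in\mathbb{R}}$, and suppose $\mathcal{X}$ and $\mathcal{Y}$ are $\pi$-conjugated, i.e. there is an automorphism $\pi:G\to G$ with $\pi(\varphi_t(x))=\psi_t(\pi(x))$ and $\varphi_t(\pi^{-1}(x))=\pi^{-1}(\psi_t(x))$ for all $t\in\mathbb{R}$, $x\in G$. Let $h:G\to G$ be a (continuous) homomorphism, $K=\ker(h)$ and $S=\ker(h\circ\pi^{-1})$. Then the pair $(\mathcal{X},\pi_K)$ is observable if and only if the pair $(\mathcal{Y},\pi_S)$ is observable.
   Context: A vector field on a Lie group $G$ is linear if its flow $(\varphi_t)_{t\in\mathbb{R}}$ is a one-parameter subgroup of $\mathrm{Aut}(G)$. For a closed subgroup $K$ of $G$, $\pi_K:G\to G/K$ denotes the canonical projection, and a pair $(\mathcal{X},\pi_K)$ consists of a linear vector field $\mathcal{X}$ (flow $\varphi_t$) and this projection. The pair is observable at $x_1\in G$ if for every $x_2\in G\setminus\{x_1\}$ there is $t\ge0$ with $\pi_K(\varphi_t(x_1))\neq\pi_K(\varphi_t(x_2))$; it is observable if it is observable at every $x_1\in G$. *)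

theory Defs
  imports "HOL-Analysis.Analysis" "HOL-Algebra.Algebra"
begin

text \<open>A (Hausdorff) topological group: a group G whose carrier is the topological
  space of T, with continuous multiplication and inversion.  (Stand-in for a Lie group,
  smooth structure is not available.)\<close>
definition topological_group :: "'a topology \<Rightarrow> ('a, 'b) monoid_scheme \<Rightarrow> bool" where
  "topological_group T G \<longleftrightarrow> group G \<and> topspace T = carrier G \<and> Hausdorff_space T
     \<and> continuous_map (prod_topology T T) T (\<lambda>(x, y). x \<otimes>\<^bsub>G\<^esub> y)
     \<and> continuous_map T T (\<lambda>x. inv\<^bsub>G\<^esub> x)"

text \<open>The flow of a linear vector field: a (continuous) one-parameter subgroup of Aut(G).\<close>
definition linear_flow :: "'a topology \<Rightarrow> ('a, 'b) monoid_scheme \<Rightarrow> (real \<Rightarrow> 'a \<Rightarrow> 'a) \<Rightarrow> bool" where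
  "linear_flow T G \<phi> \<longleftrightarrow>
     (\<forall>t. \<phi> t \<in> iso G G)
     \<and> (\<forall>x\<in>carrier G. \<phi> 0 x = x)
     \<and> (\<forall>s t. \<forall>x\<in>carrier G. \<phi> (s + t) x = \<phi> s (\<phi> t x))
     \<and> continuous_map (prod_topology euclideanreal T) T (\<lambda>(t, x). \<phi> t x)"

definition proj_quot :: "('a, 'b) monoid_scheme \<Rightarrow> 'a set \<Rightarrow> 'a \<Rightarrow> 'a set" where
  "proj_quot G K x = x <#\<^bsub>G\<^esub> K"

definition observable_at ::
  "('a, 'b) monoid_scheme \<Rightarrow> (real \<Rightarrow> 'a \<Rightarrow> 'a) \<Rightarrow> 'a set \<Rightarrow> 'a \<Rightarrow> bool" where
  "observable_at G \<phi> K x1 \<longleftrightarrow>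
     (\<forall>x2 \<in> carrier G - {x1}. \<exists>t\<ge>0.
        proj_quot G K (\<phi> t x1) \<noteq> proj_quot G K (\<phi> t x2))"

definition observable ::
  "('a, 'b) monoid_scheme \<Rightarrow> (real \<Rightarrow> 'a \<Rightarrow> 'a) \<Rightarrow> 'a set \<Rightarrow> bool" where
  "observable G \<phi> K \<longleftrightarrow> (\<forall>x1 \<in> carrier G. observable_at G \<phi> K x1)"

end

theory Submission
  imports Defs
begin

lemma lcos_eq_iff:
  fixes G (structure)
  assumes "group G" "subgroup H G" "a \<in> carrier G" "b \<in> carrier G"
  shows "(a <#\<^bsub>G\<^esub> H = b <#\<^bsub>G\<^esub> H) \<longleftrightarrow> inv\<^bsub>G\<^esub> a \<otimes>\<^bsub>G\<^esub> b \<in> H"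
proof
  interpret group G by fact
  assume e: "a <# H = b <# H"
  have "b \<in> b <# H" using assms subgroup.one_closed[OF assms(2)]
    unfolding l_coset_def by force
  then obtain k where k: "k \<in> H" "b = a \<otimes> k" using e unfolding l_coset_def by auto
  have kc: "k \<in> carrier G" using k subgroup.subset[OF assms(2)] by auto
  have "inv a \<otimes> b = k" using k kc assms by (simp add: m_assoc[symmetric])
  then show "inv a \<otimes> b \<in> H" using k by simp
next
  interpret group G by fact
  assume "inv a \<otimes> b \<in> H"
  then have "b \<in> a <# H" using subgroup.lcos_module_rev[OF assms(2) assms(1) assms(3,4)] by simp
  then show "a <# H = b <# H" using l_repr_independence assms by blast
qed

lemma key:
  fixes G (structure)
  assumes G: "group G" and pi: "\<pi> \<in> iso G G" and h: "h \<in> hom G G"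
    and a: "a \<in> carrier G" and b: "b \<in> carrier G"
  shows "(\<pi> a <#\<^bsub>G\<^esub> kernel G G (\<lambda>x. h (inv_into (carrier G) \<pi> x))
          = \<pi> b <#\<^bsub>G\<^esub> kernel G G (\<lambda>x. h (inv_into (carrier G) \<pi> x)))
        \<longleftrightarrow> (a <#\<^bsub>G\<^esub> kernel G G h = b <#\<^bsub>G\<^esub> kernel G G h)"
proof -
  interpret group G by fact
  have pinv: "inv_into (carrier G) \<pi> \<in> iso G G" using iso_set_sym[OF pi] .
  have hc: "(\<lambda>x. h (inv_into (carrier G) \<pi> x)) \<in> hom G G"
  proof -
    have "inv_into (carrier G) \<pi> \<in> hom G G" using pinv by (simp add: iso_def)
    then show ?thesis using h unfolding hom_def by (auto simp: Pi_iff)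
  qed
  have gh1: "group_hom G G h" using h by (simp add: group_hom_def group_hom_axioms_def G)
  have gh2: "group_hom G G (\<lambda>x. h (inv_into (carrier G) \<pi> x))" using hc
    by (simp add: group_hom_def group_hom_axioms_def G)
  have ghp: "group_hom G G \<pi>" using pi by (simp add: group_hom_def group_hom_axioms_def G iso_def)
  have inj: "inj_on \<pi> (carrier G)" using pi by (auto simp: iso_def bij_betw_def)
  have pc: "\<And>x. x \<in> carrier G \<Longrightarrow> \<pi> x \<in> carrier G" using pi by (auto simp: iso_def hom_def)
  have "inv (\<pi> a) \<otimes> \<pi> b = \<pi> (inv a \<otimes> b)"
    using a b group_hom.hom_inv[OF ghp] group_hom.hom_mult[OF ghp] by simp
  moreover have "h (inv_into (carrier G) \<pi> (\<pi> (inv a \<otimes> b))) = h (inv a \<otimes> b)"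
    using inv_into_f_f[OF inj] a b by simp
  ultimately show ?thesis
    using lcos_eq_iff[OF G group_hom.subgroup_kernel[OF gh1] a b]
      lcos_eq_iff[OF G group_hom.subgroup_kernel[OF gh2] pc[OF a] pc[OF b]] a b pc
    by (simp add: kernel_def)
qed

theorem proposition2p6:
  fixes T :: "'a topology" and G :: "('a, 'b) monoid_scheme"
    and \<phi> \<psi> :: "real \<Rightarrow> 'a \<Rightarrow> 'a" and \<pi> h :: "'a \<Rightarrow> 'a"
  assumes "topological_group T G"
    and "linear_flow T G \<phi>" and "linear_flow T G \<psi>"
    and "\<pi> \<in> iso G G" and "homeomorphic_map T T \<pi>"
    and "\<And>t x. x \<in> carrier G \<Longrightarrow> \<pi> (\<phi> t x) = \<psi> t (\<pi> x)"
    and "\<And>t x. x \<in> carrier G \<Longrightarrow>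
           \<phi> t (inv_into (carrier G) \<pi> x) = inv_into (carrier G) \<pi> (\<psi> t x)"
    and "h \<in> hom G G" and "continuous_map T T h"
  shows "observable G \<phi> (kernel G G h)
     \<longleftrightarrow> observable G \<psi> (kernel G G (\<lambda>x. h (inv_into (carrier G) \<pi> x)))"
proof -
  have G: "group G" using assms(1) by (simp add: topological_group_def)
  have phc: "\<And>t x. x \<in> carrier G \<Longrightarrow> \<phi> t x \<in> carrier G" using assms(2)
    by (auto simp: linear_flow_def iso_def hom_def)
  have inj: "inj_on \<pi> (carrier G)" using assms(4) by (auto simp: iso_def bij_betw_def)
  have img: "\<pi> ` carrier G = carrier G" using assms(4) by (auto simp: iso_def bij_betw_def)
  let ?S = "kernel G G (\<lambda>x. h (inv_into (carrier G) \<pi> x))"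
  let ?K = "kernel G G h"
  have E: "\<And>t x1 x2. x1 \<in> carrier G \<Longrightarrow> x2 \<in> carrier G \<Longrightarrow>
     (proj_quot G ?S (\<psi> t (\<pi> x1)) = proj_quot G ?S (\<psi> t (\<pi> x2)))
     \<longleftrightarrow> (proj_quot G ?K (\<phi> t x1) = proj_quot G ?K (\<phi> t x2))"
    unfolding proj_quot_def assms(6)[symmetric]
    using key[OF G assms(4) assms(8)] phc by blast
  show ?thesis
  proof
    assume o: "observable G \<phi> ?K"
    show "observable G \<psi> ?S"
      unfolding observable_def observable_at_def
    proof (intro ballI)
      fix y1 y2 assume y1: "y1 \<in> carrier G" and y2: "y2 \<in> carrier G - {y1}"
      obtain x1 where x1: "x1 \<in> carrier G" "y1 = \<pi> x1" using y1 img by force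
      obtain x2 where x2: "x2 \<in> carrier G" "y2 = \<pi> x2" using y2 img by force
      have "x2 \<in> carrier G - {x1}" using x1 x2 y2 by auto
      then obtain t where "t \<ge> 0" "proj_quot G ?K (\<phi> t x1) \<noteq> proj_quot G ?K (\<phi> t x2)"
        using o x1 unfolding observable_def observable_at_def by blast
      then show "\<exists>t\<ge>0. proj_quot G ?S (\<psi> t y1) \<noteq> proj_quot G ?S (\<psi> t y2)"
        using E[OF x1(1) x2(1)] x1 x2 by blast
    qed
  next
    assume o: "observable G \<psi> ?S"
    show "observable G \<phi> ?K"
      unfolding observable_def observable_at_def
    proof (intro ballI)
      fix x1 x2 assume x1: "x1 \<in> carrier G" and x2: "x2 \<in> carrier G - {x1}"
      have "\<pi> x2 \<in> carrier G - {\<pi> x1}" using x1 x2 inj img by (auto simp: inj_on_def)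
      moreover have "\<pi> x1 \<in> carrier G" using x1 img by auto
      ultimately obtain t where "t \<ge> 0" "proj_quot G ?S (\<psi> t (\<pi> x1)) \<noteq> proj_quot G ?S (\<psi> t (\<pi> x2))"
        using o unfolding observable_def observable_at_def by blast
      then show "\<exists>t\<ge>0. proj_quot G ?K (\<phi> t x1) \<noteq> proj_quot G ?K (\<phi> t x2)"
        using E x1 x2 by blast
    qed
  qed
qed

end
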